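(* Under the standing setup (in either Scenario I or Scenario II), assume $0<h<\frac{1}{d_{\max}}$ and that the expected graph is strongly connected. Then the system $x(t_{k+1})=(I-hL_{\sigma_k})^{\bar k}x(t_k)$ reaches consensus almost surely: for every $x(0)\in\mathbb{R}^n$, $P\{\lim_{k\to\infty}(M(t_k)-m(t_k))=0\}=1$, where $M(t_k)=\max_i x_i(t_k)$ and $m(t_k)=\min_i x_i(t_k)$. The same conclusion holds for the limiting system $x(t_{k+1})=e^{-L_{\sigma_k}\Delta}x(t_k)$.
   Context: Standing setup. $n\ge3$ agents. $G$ is an undirected connected graph on $\{1,\dots,n\}$ with symmetric $0/1$ adjacency matrix $A=[a_{ij}]$ (zero diagonal), degrees $d_i=\sum_j a_{ij}$, $d_{\max}=\max_i d_i$, and Laplacian $L=\mathrm{diag}(d_1,\dots,d_n)-A$, with entries $l_{ij}$. For a (possibly directed) $0/1$ adjacency matrix $B$ ($b_{ij}=1$ meaning agent $i$ receives from agent $j$), its Laplacian is $\mathrm{diag}(B\mathbf{1})-B$. Scenario I (agents 1,2 may fail to receive): $A_1$ is $A$ with row 1 set to zero, $A_2$ is $A$ with row 2 set to zero, $A_3$ is $A$ with rows 1 and 2 set to zero, $A_4=A$. Scenario II (agents 1,2 may fail to send): same with columns instead of rows. $L_i$ is the Laplacian of $A_i$ (so $L_4=L$). Probabilities $p_1=\alpha,p_2=\beta,p_3=\gamma,p_4=\theta\in(0,1)$ with $\alpha+\beta+\gamma+\theta=1$. The expected graph is the directed graph with weighted adjacency matrix $\sum_{i=1}^4 p_iA_i$.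 Sampling period $h>0$, integer $\bar k\ge1$, $\Delta=\bar k h$, $t_k=k\Delta$. $\sigma_0,\sigma_1,\dots$ are i.i.d. random variables in $\{1,2,3,4\}$ with $P(\sigma_k=i)=p_i$ (the graph is held fixed on each interval of length $\Delta$, during which the delta-operator system $\delta x=-L_{\sigma_k}x$ with step $h$ is run $\bar k$ times). The initial state $x(t_0)=x(0)\in\mathbb{R}^n$ is deterministic. $\mathbf{1}$ is the all-ones column vector. *)

theory Defs
  imports "HOL-Probability.Probability"
begin

text \<open>Agents are the natural numbers 1..n; n x n real matrices are functions
  nat => nat => real of which only the entries indexed by {1..n} x {1..n} matter.\<close>

definition mmult :: "nat \<Rightarrow> (nat \<Rightarrow> nat \<Rightarrow> real) \<Rightarrow> (nat \<Rightarrow> nat \<Rightarrow> real) \<Rightarrow> nat \<Rightarrow> nat \<Rightarrow> real" where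
  "mmult n P Q = (\<lambda>i j. \<Sum>l=1..n. P i l * Q l j)"

definition idm :: "nat \<Rightarrow> nat \<Rightarrow> real" where
  "idm = (\<lambda>i j. if i = j then 1 else 0)"

fun mpow :: "nat \<Rightarrow> (nat \<Rightarrow> nat \<Rightarrow> real) \<Rightarrow> nat \<Rightarrow> nat \<Rightarrow> nat \<Rightarrow> real" where
  "mpow n P 0 = idm"
| "mpow n P (Suc k) = mmult n P (mpow n P k)"

definition mvec :: "nat \<Rightarrow> (nat \<Rightarrow> nat \<Rightarrow> real) \<Rightarrow> (nat \<Rightarrow> real) \<Rightarrow> nat \<Rightarrow> real" where
  "mvec n P x = (\<lambda>i. \<Sum>j=1..n. P i j * x j)"

definition mexp :: "nat \<Rightarrow> (nat \<Rightarrow> nat \<Rightarrow> real) \<Rightarrow> nat \<Rightarrow> nat \<Rightarrow> real" where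
  "mexp n P = (\<lambda>i j. \<Sum>k. mpow n P k i j / fact k)"

definition laplacian :: "nat \<Rightarrow> (nat \<Rightarrow> nat \<Rightarrow> real) \<Rightarrow> nat \<Rightarrow> nat \<Rightarrow> real" where
  "laplacian n B = (\<lambda>i j. (if i = j then (\<Sum>l=1..n. B i l) else 0) - B i j)"

definition sym01_adj :: "nat \<Rightarrow> (nat \<Rightarrow> nat \<Rightarrow> real) \<Rightarrow> bool" where
  "sym01_adj n A \<longleftrightarrow> (\<forall>i\<in>{1..n}. \<forall>j\<in>{1..n}. A i j \<in> {0, 1} \<and> A i j = A j i) \<and> (\<forall>i\<in>{1..n}. A i i = 0)"

definition connected_graph :: "nat \<Rightarrow> (nat \<Rightarrow> nat \<Rightarrow> real) \<Rightarrow> bool" where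
  "connected_graph n A \<longleftrightarrow>
     (\<forall>i\<in>{1..n}. \<forall>j\<in>{1..n}. (\<lambda>u v. u \<in> {1..n} \<and> v \<in> {1..n} \<and> A u v = 1)\<^sup>*\<^sup>* i j)"

text \<open>Weighted digraph with adjacency W (W v u > 0: v receives from u, i.e. edge u -> v)
  is strongly connected: every agent reaches every agent along directed edges.\<close>
definition strongly_connected :: "nat \<Rightarrow> (nat \<Rightarrow> nat \<Rightarrow> real) \<Rightarrow> bool" where
  "strongly_connected n W \<longleftrightarrow>
     (\<forall>i\<in>{1..n}. \<forall>j\<in>{1..n}. (\<lambda>u v. u \<in> {1..n} \<and> v \<in> {1..n} \<and> W v u > 0)\<^sup>*\<^sup>* i j)"

definition dmax :: "nat \<Rightarrow> (nat \<Rightarrow> nat \<Rightarrow> real) \<Rightarrow> real" where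
  "dmax n A = Max ((\<lambda>i. \<Sum>j=1..n. A i j) ` {1..n})"

datatype scenario = ReceiveFail | SendFail

definition failed :: "nat \<Rightarrow> nat set" where
  "failed q = (if q = 1 then {1} else if q = 2 then {2} else if q = 3 then {1, 2} else {})"

text \<open>Scenario I: rows of failed agents zeroed; Scenario II: columns zeroed.\<close>
definition fail_adj :: "scenario \<Rightarrow> (nat \<Rightarrow> nat \<Rightarrow> real) \<Rightarrow> nat \<Rightarrow> nat \<Rightarrow> nat \<Rightarrow> real" where
  "fail_adj s A q = (\<lambda>i j. if (case s of ReceiveFail \<Rightarrow> i \<in> failed q | SendFail \<Rightarrow> j \<in> failed q)
                           then 0 else A i j)"

definition probs :: "real \<Rightarrow> real \<Rightarrow> real \<Rightarrow> real \<Rightarrow> nat \<Rightarrow> real" where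
  "probs \<alpha> \<beta> \<gamma> \<theta> q = (if q = 1 then \<alpha> else if q = 2 then \<beta> else if q = 3 then \<gamma> else if q = 4 then \<theta> else 0)"

definition expected_graph :: "scenario \<Rightarrow> (nat \<Rightarrow> nat \<Rightarrow> real) \<Rightarrow> (nat \<Rightarrow> real) \<Rightarrow> nat \<Rightarrow> nat \<Rightarrow> real" where
  "expected_graph s A p = (\<lambda>i j. \<Sum>q=1..4. p q * fail_adj s A q i j)"

fun traj :: "nat \<Rightarrow> (nat \<Rightarrow> nat \<Rightarrow> nat \<Rightarrow> real) \<Rightarrow> (nat \<Rightarrow> nat) \<Rightarrow> (nat \<Rightarrow> real) \<Rightarrow> nat \<Rightarrow> nat \<Rightarrow> real" where
  "traj n \<Phi> sg x0 0 = x0"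
| "traj n \<Phi> sg x0 (Suc k) = mvec n (\<Phi> (sg k)) (traj n \<Phi> sg x0 k)"

definition spread :: "nat \<Rightarrow> (nat \<Rightarrow> real) \<Rightarrow> real" where
  "spread n x = Max (x ` {1..n}) - Min (x ` {1..n})"

definition euler_trans :: "nat \<Rightarrow> real \<Rightarrow> nat \<Rightarrow> (nat \<Rightarrow> nat \<Rightarrow> real) \<Rightarrow> nat \<Rightarrow> nat \<Rightarrow> real" where
  "euler_trans n h kbar L = mpow n (\<lambda>i j. idm i j - h * L i j) kbar"

definition exp_trans :: "nat \<Rightarrow> real \<Rightarrow> (nat \<Rightarrow> nat \<Rightarrow> real) \<Rightarrow> nat \<Rightarrow> nat \<Rightarrow> real" where
  "exp_trans n \<Delta> L = mexp n (\<lambda>i j. - (\<Delta> * L i j))"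

end

theory Submission
  imports Defs
begin


lemma mvec_mmult: "mvec n (mmult n P Q) x = mvec n P (mvec n Q x)"
proof
  fix i
  show "mvec n (mmult n P Q) x i = mvec n P (mvec n Q x) i"
    unfolding mvec_def mmult_def
    by (simp add: sum_distrib_left sum_distrib_right mult.assoc) (rule sum.swap)
qed

lemma sum_idm: "i \<in> {1..n} \<Longrightarrow> (\<Sum>j=1..n. idm i j * f j) = f i"
proof -
  have "(\<Sum>j=1..n. idm i j * f j) = (\<Sum>j=1..n. if i = j then f j else 0)"
    by (rule sum.cong) (auto simp: idm_def)
  then show "i \<in> {1..n} \<Longrightarrow> ?thesis" by simp
qed

lemma sum_idm': "i \<in> {1..n} \<Longrightarrow> (\<Sum>j=1..n. f j * idm j i) = f i"
proof -
  have "(\<Sum>j=1..n. f j * idm j i) = (\<Sum>j=1..n. if i = j then f j else 0)"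
    by (rule sum.cong) (auto simp: idm_def)
  then show "i \<in> {1..n} \<Longrightarrow> ?thesis" by simp
qed

lemma mpow_nonneg:
  assumes "\<And>i j. i \<in> {1..n} \<Longrightarrow> j \<in> {1..n} \<Longrightarrow> 0 \<le> Q i j"
  shows "i \<in> {1..n} \<Longrightarrow> 0 \<le> mpow n Q k i j"
proof (induction k arbitrary: i j)
  case 0 then show ?case by (simp add: idm_def)
next
  case (Suc k) then show ?case using assms by (auto simp: mmult_def intro!: sum_nonneg)
qed

lemma mpow_rowsum:
  assumes "\<And>i. i \<in> {1..n} \<Longrightarrow> (\<Sum>j=1..n. Q i j) = 1"
  shows "i \<in> {1..n} \<Longrightarrow> (\<Sum>j=1..n. mpow n Q k i j) = 1"
proof (induction k arbitrary: i)
  case 0 then show ?case by (simp add: idm_def)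
next
  case (Suc k)
  have "(\<Sum>j=1..n. mpow n Q (Suc k) i j) = (\<Sum>l=1..n. Q i l * (\<Sum>j=1..n. mpow n Q k l j))"
    by (simp add: mmult_def sum_distrib_left) (rule sum.swap)
  also have "\<dots> = (\<Sum>l=1..n. Q i l)" using Suc.IH by simp
  finally show ?case using assms Suc.prems by simp
qed

lemma mpow_term_le:
  assumes nn: "\<And>i j. i \<in> {1..n} \<Longrightarrow> j \<in> {1..n} \<Longrightarrow> 0 \<le> Q i j"
    and i: "i \<in> {1..n}" and l: "l \<in> {1..n}"
  shows "Q i l * mpow n Q k l j \<le> mpow n Q (Suc k) i j"
proof -
  have "Q i l * mpow n Q k l j \<le> (\<Sum>l'=1..n. Q i l' * mpow n Q k l' j)"
    by (rule member_le_sum) (use l nn i mpow_nonneg[OF nn] in \<open>auto intro: mult_nonneg_nonneg\<close>)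
  then show ?thesis by (simp add: mmult_def)
qed

lemma mpow_diag_pos:
  assumes nn: "\<And>i j. i \<in> {1..n} \<Longrightarrow> j \<in> {1..n} \<Longrightarrow> 0 \<le> Q i j"
    and d: "\<And>i. i \<in> {1..n} \<Longrightarrow> 0 < Q i i" and i: "i \<in> {1..n}"
  shows "0 < mpow n Q k i i"
proof (induction k)
  case 0 then show ?case by (simp add: idm_def)
next
  case (Suc k)
  have "0 < Q i i * mpow n Q k i i" using Suc d i by simp
  also have "\<dots> \<le> mpow n Q (Suc k) i i" by (rule mpow_term_le[OF nn i i])
  finally show ?case .
qed

lemma mpow_pos_mono:
  assumes nn: "\<And>i j. i \<in> {1..n} \<Longrightarrow> j \<in> {1..n} \<Longrightarrow> 0 \<le> Q i j"
    and d: "\<And>i. i \<in> {1..n} \<Longrightarrow> 0 < Q i i" and i: "i \<in> {1..n}"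
    and p: "0 < mpow n Q k i j" and kk: "k \<le> k'"
  shows "0 < mpow n Q k' i j"
  using kk
proof (induction k' rule: dec_induct)
  case base then show ?case using p .
next
  case (step m)
  have "0 < Q i i * mpow n Q m i j" using step d i by simp
  also have "\<dots> \<le> mpow n Q (Suc m) i j" by (rule mpow_term_le[OF nn i i])
  finally show ?case .
qed

lemma mpow_path_pos:
  assumes nn: "\<And>i j. i \<in> {1..n} \<Longrightarrow> j \<in> {1..n} \<Longrightarrow> 0 \<le> Q i j"
    and e: "\<And>i j. i \<in> {1..n} \<Longrightarrow> j \<in> {1..n} \<Longrightarrow> A i j = 1 \<Longrightarrow> 0 < Q i j"
    and p: "(\<lambda>u v. u \<in> {1..n} \<and> v \<in> {1..n} \<and> A u v = 1)\<^sup>*\<^sup>* i j"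
  shows "\<exists>k. 0 < mpow n Q k i j"
  using p
proof (induction rule: converse_rtranclp_induct)
  case base then show ?case by (rule exI[of _ 0]) (simp add: idm_def)
next
  case (step y z)
  then obtain k where k: "0 < mpow n Q k z j" by blast
  have "0 < Q y z * mpow n Q k z j" using step e k by simp
  also have "\<dots> \<le> mpow n Q (Suc k) y j" by (rule mpow_term_le[OF nn]) (use step in auto)
  finally show ?case by blast
qed

lemma mpow_all_pos:
  assumes nn: "\<And>i j. i \<in> {1..n} \<Longrightarrow> j \<in> {1..n} \<Longrightarrow> 0 \<le> Q i j"
    and d: "\<And>i. i \<in> {1..n} \<Longrightarrow> 0 < Q i i"
    and e: "\<And>i j. i \<in> {1..n} \<Longrightarrow> j \<in> {1..n} \<Longrightarrow> A i j = 1 \<Longrightarrow> 0 < Q i j"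
    and c: "connected_graph n A"
  shows "\<exists>b>0. \<forall>i\<in>{1..n}. \<forall>j\<in>{1..n}. 0 < mpow n Q b i j"
proof -
  have "\<forall>p\<in>{1..n}\<times>{1..n}. \<exists>k. 0 < mpow n Q k (fst p) (snd p)"
  proof
    fix p assume "p \<in> {1..n}\<times>{1..n}"
    then have "(\<lambda>u v. u \<in> {1..n} \<and> v \<in> {1..n} \<and> A u v = 1)\<^sup>*\<^sup>* (fst p) (snd p)"
      using c unfolding connected_graph_def by auto
    from mpow_path_pos[OF nn e this]
    show "\<exists>k. 0 < mpow n Q k (fst p) (snd p)" .
  qed
  then obtain f where f: "\<And>p. p\<in>{1..n}\<times>{1..n} \<Longrightarrow> 0 < mpow n Q (f p) (fst p) (snd p)"
    by metis
  define b where "b = Suc (Max (f ` ({1..n}\<times>{1..n})))"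
  show ?thesis
  proof (intro exI[of _ b] conjI ballI)
    fix i j assume ij: "i \<in> {1..n}" "j \<in> {1..n}"
    have "f (i,j) \<le> b" unfolding b_def using ij by (intro le_SucI Max_ge) auto
    moreover have "0 < mpow n Q (f (i,j)) i j" using f[of "(i,j)"] ij by auto
    ultimately show "0 < mpow n Q b i j"
      using mpow_pos_mono[where Q=Q and n=n, OF nn d ij(1)] by blast
  qed (simp add: b_def)
qed



lemma spread_contract:
  assumes n: "1 \<le> n"
    and ge: "\<And>i j. i \<in> {1..n} \<Longrightarrow> j \<in> {1..n} \<Longrightarrow> \<epsilon> \<le> P i j" and e0: "0 \<le> \<epsilon>"
    and rs: "\<And>i. i \<in> {1..n} \<Longrightarrow> (\<Sum>j=1..n. P i j) = 1"
  shows "spread n (mvec n P x) \<le> (1 - 2 * \<epsilon>) * spread n x"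
proof -
  let ?R = "{1..n::nat}"
  have fin: "finite (x ` ?R)" and ne: "x ` ?R \<noteq> {}" using n by auto
  define Mx where "Mx = Max (x ` ?R)"
  define mx where "mx = Min (x ` ?R)"
  obtain j0 where j0: "j0 \<in> ?R" "x j0 = Mx" using Max_in[OF fin ne] unfolding Mx_def by auto
  have xle: "x j \<le> Mx" "mx \<le> x j" if "j \<in> ?R" for j
    using that fin unfolding Mx_def mx_def by auto
  have lo: "mx + \<epsilon> * (Mx - mx) \<le> mvec n P x i" and hi: "mvec n P x i \<le> Mx - \<epsilon> * (Mx - mx)"
    if i: "i \<in> ?R" for i
  proof -
    have "mvec n P x i - mx = (\<Sum>j=1..n. P i j * (x j - mx))"
      using rs[OF i] by (simp add: mvec_def right_diff_distrib sum_subtractf flip: sum_distrib_right)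
    also have "\<dots> \<ge> P i j0 * (x j0 - mx)"
    proof (rule member_le_sum)
      fix j assume "j \<in> ?R - {j0}"
      then have "0 \<le> P i j" "0 \<le> x j - mx" using ge[OF i, of j] e0 xle[of j] by auto
      then show "0 \<le> P i j * (x j - mx)" by simp
    qed (use j0 in auto)
    finally have a: "P i j0 * (Mx - mx) \<le> mvec n P x i - mx" using j0 by simp
    have b: "\<epsilon> * (Mx - mx) \<le> P i j0 * (Mx - mx)"
      by (rule mult_right_mono) (use ge i j0 xle in auto)
    show "mx + \<epsilon> * (Mx - mx) \<le> mvec n P x i" using a b by simp
    obtain j1 where j1: "j1 \<in> ?R" "x j1 = mx" using Min_in[OF fin ne] unfolding mx_def by auto
    have "Mx - mvec n P x i = (\<Sum>j=1..n. P i j * (Mx - x j))"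
      using rs[OF i] by (simp add: mvec_def right_diff_distrib sum_subtractf flip: sum_distrib_right)
    also have "\<dots> \<ge> P i j1 * (Mx - x j1)"
    proof (rule member_le_sum)
      fix j assume "j \<in> ?R - {j1}"
      then have "0 \<le> P i j" "0 \<le> Mx - x j" using ge[OF i, of j] e0 xle[of j] by auto
      then show "0 \<le> P i j * (Mx - x j)" by simp
    qed (use j1 in auto)
    moreover have "\<epsilon> * (Mx - mx) \<le> P i j1 * (Mx - mx)"
      by (rule mult_right_mono) (use ge i j1 xle j0 in auto)
    ultimately show "mvec n P x i \<le> Mx - \<epsilon> * (Mx - mx)" using j1(2) by (metis diff_ge_0_iff_ge le_diff_eq order_trans diff_diff_eq2 add.commute)
  qed
  have fin2: "finite (mvec n P x ` ?R)" and ne2: "mvec n P x ` ?R \<noteq> {}" using n by auto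
  have "Max (mvec n P x ` ?R) \<le> Mx - \<epsilon> * (Mx - mx)"
    using hi fin2 ne2 by (auto simp: Max_le_iff)
  moreover have "mx + \<epsilon> * (Mx - mx) \<le> Min (mvec n P x ` ?R)"
    using lo fin2 ne2 by (auto simp: Min_ge_iff)
  ultimately show ?thesis unfolding spread_def Mx_def[symmetric] mx_def[symmetric]
    by (simp add: algebra_simps)
qed

lemma spread_nonneg: assumes "1 \<le> n" shows "0 \<le> spread n x"
proof -
  have "Min (x ` {1..n}) \<le> x 1" "x 1 \<le> Max (x ` {1..n})" using assms by auto
  then show ?thesis unfolding spread_def by linarith
qed

lemma mvec_idm: "i \<in> {1..n} \<Longrightarrow> mvec n idm y i = y i"
  unfolding mvec_def by (rule sum_idm)

lemma spread_cong: "(\<And>i. i \<in> {1..n} \<Longrightarrow> x i = y i) \<Longrightarrow> spread n x = spread n y"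
  unfolding spread_def by (metis image_cong)

lemma mvec_cong: "(\<And>i. i \<in> {1..n} \<Longrightarrow> x i = y i) \<Longrightarrow> mvec n P x = mvec n P y"
  unfolding mvec_def by (auto intro!: ext sum.cong)

lemma traj_block:
  assumes "\<And>i. i < b \<Longrightarrow> sg (k + i) = q"
  shows "i \<in> {1..n} \<Longrightarrow> traj n \<Phi> sg x0 (k + b) i = mvec n (mpow n (\<Phi> q) b) (traj n \<Phi> sg x0 k) i"
  using assms
proof (induction b arbitrary: i)
  case 0 then show ?case using mvec_idm[of i n] by simp
next
  case (Suc b)
  have "traj n \<Phi> sg x0 (k + Suc b) = mvec n (\<Phi> q) (traj n \<Phi> sg x0 (k + b))"
    using Suc.prems(2)[of b] by simp
  also have "\<dots> = mvec n (\<Phi> q) (mvec n (mpow n (\<Phi> q) b) (traj n \<Phi> sg x0 k))"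
    by (rule mvec_cong) (use Suc in auto)
  finally show ?case by (simp add: mvec_mmult)
qed

lemma decay_lemma:
  fixes s :: "nat \<Rightarrow> real"
  assumes nn: "\<And>k. 0 \<le> s k" and dec: "\<And>k. s (Suc k) \<le> s k"
    and c: "0 \<le> c" "c < 1"
    and inf: "\<And>N. \<exists>k\<ge>N. s (k + b) \<le> c * s k"
  shows "s \<longlonglongrightarrow> 0"
proof -
  have mono: "s k' \<le> s k" if "k \<le> k'" for k k'
    using that by (induction k' rule: dec_induct) (auto intro: order_trans[OF dec])
  have ex: "\<exists>k. s k \<le> c ^ j * s 0" for j
  proof (induction j)
    case 0 then show ?case by auto
  next
    case (Suc j)
    then obtain k where k: "s k \<le> c ^ j * s 0" by blast
    obtain k' where k': "k' \<ge> k" "s (k' + b) \<le> c * s k'" using inf by blast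
    have "s (k' + b) \<le> c * s k'" by fact
    also have "\<dots> \<le> c * s k" using mono[OF k'(1)] c by (simp add: mult_left_mono)
    also have "\<dots> \<le> c * (c ^ j * s 0)" using k c by (simp add: mult_left_mono)
    finally have "s (k' + b) \<le> c ^ Suc j * s 0" by (simp add: mult.assoc)
    then show ?case by blast
  qed
  show ?thesis
  proof (rule LIMSEQ_I)
    fix r :: real assume r: "0 < r"
    have "(\<lambda>j. c ^ j * s 0) \<longlonglongrightarrow> 0 * s 0"
      by (intro tendsto_mult LIMSEQ_power_zero tendsto_const) (use c in auto)
    then obtain j where "c ^ j * s 0 < r"
      using r by (metis (no_types, lifting) LIMSEQ_D diff_zero mult_zero_left nn
          abs_of_nonneg c(1) zero_le_power mult_nonneg_nonneg real_norm_def order_refl)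
    moreover obtain k where "s k \<le> c ^ j * s 0" using ex[of j] by blast
    ultimately have k: "s k < r" by linarith
    show "\<exists>no. \<forall>m\<ge>no. norm (s m - 0) < r"
      using k mono nn by (intro exI[of _ k]) (auto intro: le_less_trans)
  qed
qed



context prob_space begin

lemma rect_prob:
  fixes \<sigma> :: "nat \<Rightarrow> 'a \<Rightarrow> nat"
  assumes ind: "indep_vars (\<lambda>_. count_space UNIV) \<sigma> UNIV"
    and pr: "\<And>k. prob {\<omega> \<in> space M. \<sigma> k \<omega> = q} = \<theta>"
    and K: "finite K" "K \<noteq> {}"
  shows "prob {\<omega> \<in> space M. \<forall>k\<in>K. \<sigma> k \<omega> = q} = \<theta> ^ card K"
proof -
  have "{\<omega> \<in> space M. \<forall>k\<in>K. \<sigma> k \<omega> = q} = (\<Inter>k\<in>K. \<sigma> k -` {q} \<inter> space M)"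
    using K by auto
  also have "prob \<dots> = (\<Prod>k\<in>K. prob (\<sigma> k -` {q} \<inter> space M))"
    by (rule indep_varsD[OF ind]) (use K in auto)
  also have "\<dots> = (\<Prod>k\<in>K. \<theta>)"
  proof (rule prod.cong)
    fix k
    have "\<sigma> k -` {q} \<inter> space M = {\<omega> \<in> space M. \<sigma> k \<omega> = q}" by auto
    then show "prob (\<sigma> k -` {q} \<inter> space M) = \<theta>" using pr by simp
  qed simp
  finally show ?thesis by simp
qed

lemma blocks_ae:
  fixes \<sigma> :: "nat \<Rightarrow> 'a \<Rightarrow> nat"
  assumes meas[measurable]: "\<And>k. \<sigma> k \<in> measurable M (count_space UNIV)"
    and ind: "indep_vars (\<lambda>_. count_space UNIV) \<sigma> UNIV"
    and pr: "\<And>k. prob {\<omega> \<in> space M. \<sigma> k \<omega> = q} = \<theta>"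
    and th: "0 < \<theta>" and b: "0 < b"
  shows "AE \<omega> in M. \<forall>N. \<exists>k\<ge>N. \<forall>i<b. \<sigma> (k + i) \<omega> = q"
proof -
  define B where "B N j = {\<omega>\<in>space M. \<forall>i<b. \<sigma> (N + j*b + i) \<omega> = q}" for N j
  define Bad where "Bad N = {\<omega>\<in>space M. \<forall>k\<ge>N. \<not> (\<forall>i<b. \<sigma> (k + i) \<omega> = q)}" for N
  have Bev[measurable]: "B N j \<in> events" for N j unfolding B_def by measurable
  have Badev[measurable]: "Bad N \<in> events" for N unfolding Bad_def by measurable
  have th1: "\<theta> \<le> 1" using pr[of 0] prob_le_1 by metis
  have inj: "inj_on (\<lambda>(j, i). N + j * b + i) (J \<times> {..<b})" for N J
  proof (rule inj_onI, clarsimp)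
    fix j i j' i' assume "i < b" "i' < b" "j * b + i = j' * b + i'"
    then show "j = j' \<and> i = i'"
      by (metis add.commute div_mult_self3 div_less mod_mult_self3 mod_less not_less0 add_0 b
          less_nat_zero_code)
  qed
  have probB: "prob (\<Inter>j\<in>J. B N j) = (\<theta> ^ b) ^ card J" if J: "finite J" "J \<noteq> {}" for N J
  proof -
    let ?K = "(\<lambda>(j, i). N + j * b + i) ` (J \<times> {..<b})"
    have "(\<Inter>j\<in>J. B N j) = {\<omega> \<in> space M. \<forall>k\<in>?K. \<sigma> k \<omega> = q}"
      using J unfolding B_def by auto
    also have "prob \<dots> = \<theta> ^ card ?K"
      by (rule rect_prob[OF ind pr]) (use J b in auto)
    also have "card ?K = card J * b" using card_image[OF inj] J by (simp add: card_cartesian_product)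
    finally show ?thesis by (simp add: power_mult mult.commute)
  qed
  have ie: "indep_events (B N) UNIV" for N
  proof (rule indep_eventsI)
    fix J :: "nat set" assume "finite J" "J \<noteq> {}"
    then show "prob (\<Inter>j\<in>J. B N j) = (\<Prod>j\<in>J. prob (B N j))"
      using probB[of J N] probB[of "{j}" N for j] by simp
  qed simp
  have is2: "indep_sets (\<lambda>j. sigma_sets (space M) {B N j}) UNIV" for N
    using ie[of N] unfolding indep_events_def_alt
    by (rule indep_sets_sigma) (auto simp: Int_stable_def)
  have bad_le: "prob (Bad N) \<le> (1 - \<theta> ^ b) ^ J" if J: "0 < J" for N J
  proof -
    have "Bad N \<subseteq> (\<Inter>j\<in>{..<J}. space M - B N j)"
    proof
      fix \<omega> assume "\<omega> \<in> Bad N"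
      then have w: "\<omega> \<in> space M" "\<And>k. k \<ge> N \<Longrightarrow> \<exists>i<b. \<sigma> (k + i) \<omega> \<noteq> q"
        unfolding Bad_def by auto
      show "\<omega> \<in> (\<Inter>j\<in>{..<J}. space M - B N j)"
      proof (clarsimp simp: w(1))
        fix j assume "\<omega> \<in> B N j"
        moreover obtain i where "i < b" "\<sigma> (N + j * b + i) \<omega> \<noteq> q" using w(2)[of "N + j * b"] by auto
        ultimately show False unfolding B_def by auto
      qed

    qed
    then have "prob (Bad N) \<le> prob (\<Inter>j\<in>{..<J}. space M - B N j)"
      using J by (intro finite_measure_mono) auto
    also have "\<dots> = (\<Prod>j\<in>{..<J}. prob (space M - B N j))"
      by (rule indep_setsD[OF is2]) (use J in \<open>auto intro: sigma_sets.Compl sigma_sets.Basic\<close>)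
    also have "\<dots> = (\<Prod>j\<in>{..<J}. 1 - \<theta> ^ b)"
      using probB[of "{j}" N for j] by (simp add: prob_compl)
    finally show ?thesis by simp
  qed
  have "(\<lambda>J. (1 - \<theta> ^ b) ^ J) \<longlonglongrightarrow> 0"
  proof (rule LIMSEQ_power_zero)
    have "0 < \<theta> ^ b" "\<theta> ^ b \<le> 1" using th th1 by (auto intro: power_le_one)
    then show "norm (1 - \<theta> ^ b) < 1" by simp
  qed
  then have "prob (Bad N) \<le> 0" for N
    using bad_le by (intro LIMSEQ_le_const[where x=0]) (auto intro!: exI[of _ 1])
  then have "AE \<omega> in M. \<omega> \<notin> Bad N" for N
    using prob_eq_0[OF Badev[of N]] measure_nonneg[of M "Bad N"] by (meson order_antisym)
  then have "AE \<omega> in M. \<forall>N. \<omega> \<notin> Bad N" by (simp add: AE_all_countable)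
  then show ?thesis using AE_space by eventually_elim (auto simp: Bad_def)
qed

end


lemma traj_meas:
  fixes \<sigma> :: "nat \<Rightarrow> 'a \<Rightarrow> nat"
  assumes meas[measurable]: "\<And>k. \<sigma> k \<in> measurable M (count_space UNIV)"
  shows "(\<lambda>\<omega>. traj n \<Phi> (\<lambda>k. \<sigma> k \<omega>) x0 k i) \<in> borel_measurable M"
proof (induction k arbitrary: i)
  case 0 then show ?case by simp
next
  case (Suc k)
  have [measurable]: "(\<lambda>\<omega>. \<Phi> (\<sigma> k \<omega>) i j) \<in> borel_measurable M" for j
    by (rule measurable_compose[OF meas]) simp
  have [measurable]: "(\<lambda>\<omega>. traj n \<Phi> (\<lambda>k. \<sigma> k \<omega>) x0 k j) \<in> borel_measurable M" for j
    by (rule Suc.IH)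
  show ?case by (simp add: mvec_def)
qed

lemma consensus_generic:
  fixes \<sigma> :: "nat \<Rightarrow> 'a \<Rightarrow> nat"
  assumes ps: "prob_space M"
    and meas: "\<And>k. \<sigma> k \<in> measurable M (count_space UNIV)"
    and ind: "prob_space.indep_vars M (\<lambda>_. count_space UNIV) \<sigma> UNIV"
    and rng: "\<And>k \<omega>. \<omega> \<in> space M \<Longrightarrow> \<sigma> k \<omega> \<in> {1..4}"
    and pr4: "\<And>k. measure M {\<omega> \<in> space M. \<sigma> k \<omega> = 4} = \<theta>"
    and th: "0 < \<theta>" and n: "1 \<le> n"
    and nn: "\<And>q i j. q \<in> {1..4} \<Longrightarrow> i \<in> {1..n} \<Longrightarrow> j \<in> {1..n} \<Longrightarrow> 0 \<le> \<Phi> q i j"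
    and rs: "\<And>q i. q \<in> {1..4} \<Longrightarrow> i \<in> {1..n} \<Longrightarrow> (\<Sum>j=1..n. \<Phi> q i j) = 1"
    and pos: "\<exists>b>0. \<forall>i\<in>{1..n}. \<forall>j\<in>{1..n}. 0 < mpow n (\<Phi> 4) b i j"
  shows "measure M {\<omega> \<in> space M. (\<lambda>k. spread n (traj n \<Phi> (\<lambda>k. \<sigma> k \<omega>) x0 k)) \<longlonglongrightarrow> 0} = 1"
proof -
  interpret prob_space M by (rule ps)
  obtain b where b: "0 < b" "\<And>i j. i \<in> {1..n} \<Longrightarrow> j \<in> {1..n} \<Longrightarrow> 0 < mpow n (\<Phi> 4) b i j"
    using pos by blast
  let ?R = "{1..n::nat}"
  let ?\<Psi> = "mpow n (\<Phi> 4) b"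
  define \<epsilon>0 where "\<epsilon>0 = Min ((\<lambda>p. ?\<Psi> (fst p) (snd p)) ` (?R \<times> ?R))"
  have "\<epsilon>0 \<in> (\<lambda>p. ?\<Psi> (fst p) (snd p)) ` (?R \<times> ?R)"
    unfolding \<epsilon>0_def using n by (intro Min_in) auto
  then have e0pos: "0 < \<epsilon>0" using b by auto
  have e0le: "\<epsilon>0 \<le> ?\<Psi> i j" if "i \<in> ?R" "j \<in> ?R" for i j
    unfolding \<epsilon>0_def using that by (intro Min_le) (auto intro!: image_eqI[where x="(i,j)"])
  define \<epsilon> where "\<epsilon> = min \<epsilon>0 (1/4)"
  have epos: "0 < \<epsilon>" "\<epsilon> \<le> 1/4" using e0pos by (auto simp: \<epsilon>_def)
  have ele: "\<epsilon> \<le> ?\<Psi> i j" if "i \<in> ?R" "j \<in> ?R" for i j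
    using e0le[OF that] by (auto simp: \<epsilon>_def)
  have rs4: "(\<Sum>j=1..n. ?\<Psi> i j) = 1" if "i \<in> ?R" for i
    by (rule mpow_rowsum) (use rs that in auto)
  define c where "c = 1 - 2 * \<epsilon>"
  have c: "0 \<le> c" "c < 1" using epos by (auto simp: c_def)
  have conv: "(\<lambda>k. spread n (traj n \<Phi> (\<lambda>k. \<sigma> k \<omega>) x0 k)) \<longlonglongrightarrow> 0"
    if \<omega>: "\<omega> \<in> space M" and blk: "\<forall>N. \<exists>k\<ge>N. \<forall>i<b. \<sigma> (k + i) \<omega> = 4" for \<omega>
  proof (rule decay_lemma[OF _ _ c])
    let ?x = "traj n \<Phi> (\<lambda>k. \<sigma> k \<omega>) x0"
    show "0 \<le> spread n (?x k)" for k using spread_nonneg[OF n] .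
    show "spread n (?x (Suc k)) \<le> spread n (?x k)" for k
    proof -
      have q: "\<sigma> k \<omega> \<in> {1..4}" using rng[OF \<omega>] .
      have "spread n (?x (Suc k)) \<le> (1 - 2 * 0) * spread n (?x k)"
        unfolding traj.simps by (rule spread_contract[OF n]) (use nn[OF q] rs[OF q] in auto)
      then show ?thesis by simp
    qed
    show "\<exists>k\<ge>N. spread n (?x (k + b)) \<le> c * spread n (?x k)" for N
    proof -
      obtain k where k: "k \<ge> N" "\<And>i. i < b \<Longrightarrow> \<sigma> (k + i) \<omega> = 4" using blk by blast
      have "spread n (?x (k + b)) = spread n (mvec n ?\<Psi> (?x k))"
        by (rule spread_cong) (rule traj_block, use k in auto)
      also have "\<dots> \<le> c * spread n (?x k)"
        unfolding c_def by (rule spread_contract[OF n ele _ rs4]) (use epos in auto)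
      finally show ?thesis using k by blast
    qed
  qed
  have pr4': "prob {\<omega> \<in> space M. \<sigma> k \<omega> = 4} = \<theta>" for k using pr4 by simp
  have ae: "AE \<omega> in M. \<forall>N. \<exists>k\<ge>N. \<forall>i<b. \<sigma> (k + i) \<omega> = 4"
    by (rule blocks_ae[OF meas ind pr4' th b(1)])
  have [measurable]: "\<And>k. \<sigma> k \<in> measurable M (count_space UNIV)" by (rule meas)
  have tm[measurable]: "\<And>k i. (\<lambda>\<omega>. traj n \<Phi> (\<lambda>k. \<sigma> k \<omega>) x0 k i) \<in> borel_measurable M"
    by (rule traj_meas[OF meas])
  have [measurable]: "(\<lambda>\<omega>. spread n (traj n \<Phi> (\<lambda>k. \<sigma> k \<omega>) x0 k)) \<in> borel_measurable M" for k
    unfolding spread_def by measurable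
  have "{\<omega> \<in> space M. (\<lambda>k. spread n (traj n \<Phi> (\<lambda>k. \<sigma> k \<omega>) x0 k)) \<longlonglongrightarrow> 0} \<in> sets M"
    by measurable
  moreover have "AE \<omega> in M. (\<lambda>k. spread n (traj n \<Phi> (\<lambda>k. \<sigma> k \<omega>) x0 k)) \<longlonglongrightarrow> 0"
    using ae AE_space by eventually_elim (use conv in blast)
  ultimately show ?thesis by (simp add: prob_Collect_eq_1)
qed



lemma coef_step:
  fixes x :: real
  assumes "m \<le> Suc k"
  shows "(if m = 0 then 0 else of_nat (k choose (m - 1)) * x ^ (k - (m - 1))) + x * (of_nat (k choose m) * x ^ (k - m))
       = of_nat (Suc k choose m) * x ^ (Suc k - m)"
proof (cases m)
  case 0 then show ?thesis by simp
next
  case (Suc m')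
  show ?thesis
  proof (cases "m' = k")
    case True then show ?thesis using Suc by simp
  next
    case False
    then have "m' < k" using assms Suc by simp
    then have e: "x * x ^ (k - Suc m') = x ^ (k - m')"
      by (metis Suc_diff_Suc power_Suc)
    have "of_nat (k choose m') * x ^ (k - m') + x * (of_nat (k choose Suc m') * x ^ (k - Suc m'))
        = (of_nat (k choose m') + of_nat (k choose Suc m')) * x ^ (k - m')"
      using e by (simp add: algebra_simps)
    then show ?thesis using Suc by (simp add: choose_reduce_nat)
  qed
qed

lemma binom_step:
  fixes g :: "nat \<Rightarrow> real"
  shows "(\<Sum>m\<le>k. of_nat (k choose m) * x ^ (k - m) * g (Suc m)) + x * (\<Sum>m\<le>k. of_nat (k choose m) * x ^ (k - m) * g m)
       = (\<Sum>m\<le>Suc k. of_nat (Suc k choose m) * x ^ (Suc k - m) * g m)"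
proof -
  have a: "(\<Sum>m\<le>k. of_nat (k choose m) * x ^ (k - m) * g (Suc m))
      = (\<Sum>m\<le>Suc k. (if m = 0 then 0 else of_nat (k choose (m - 1)) * x ^ (k - (m - 1))) * g m)"
    by (subst sum.atMost_Suc_shift) simp
  have b: "x * (\<Sum>m\<le>k. of_nat (k choose m) * x ^ (k - m) * g m)
      = (\<Sum>m\<le>Suc k. x * (of_nat (k choose m) * x ^ (k - m)) * g m)"
    by (simp add: sum_distrib_left mult.assoc)
  have "(\<Sum>m\<le>Suc k. (if m = 0 then 0 else of_nat (k choose (m - 1)) * x ^ (k - (m - 1))) * g m)
      + (\<Sum>m\<le>Suc k. x * (of_nat (k choose m) * x ^ (k - m)) * g m)
      = (\<Sum>m\<le>Suc k. of_nat (Suc k choose m) * x ^ (Suc k - m) * g m)"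
    unfolding sum.distrib[symmetric]
  proof (rule sum.cong[OF refl])
    fix m assume "m \<in> {..Suc k}"
    then have "m \<le> Suc k" by simp
    from coef_step[OF this, of x]
    show "(if m = 0 then 0 else of_nat (k choose (m - 1)) * x ^ (k - (m - 1))) * g m +
          x * (of_nat (k choose m) * x ^ (k - m)) * g m = of_nat (Suc k choose m) * x ^ (Suc k - m) * g m"
      by (metis distrib_right)
  qed
  then show ?thesis using a b by simp
qed

lemma mpow_shift:
  assumes i: "i \<in> {1..n}"
  shows "mpow n (\<lambda>i j. Q i j - c * idm i j) k i j = (\<Sum>m\<le>k. of_nat (k choose m) * (-c) ^ (k - m) * mpow n Q m i j)"
  using i
proof (induction k arbitrary: i)
  case 0 then show ?case by simp
next
  case (Suc k)
  have "mpow n (\<lambda>i j. Q i j - c * idm i j) (Suc k) i j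
      = (\<Sum>l=1..n. Q i l * mpow n (\<lambda>i j. Q i j - c * idm i j) k l j) - c * (\<Sum>l=1..n. idm i l * mpow n (\<lambda>i j. Q i j - c * idm i j) k l j)"
    by (simp add: mmult_def left_diff_distrib sum_subtractf sum_distrib_left mult.assoc)
  also have "(\<Sum>l=1..n. idm i l * mpow n (\<lambda>i j. Q i j - c * idm i j) k l j) = mpow n (\<lambda>i j. Q i j - c * idm i j) k i j"
    by (rule sum_idm[OF Suc.prems])
  also have "(\<Sum>l=1..n. Q i l * mpow n (\<lambda>i j. Q i j - c * idm i j) k l j)
      = (\<Sum>l=1..n. Q i l * (\<Sum>m\<le>k. of_nat (k choose m) * (-c) ^ (k - m) * mpow n Q m l j))"
    by (rule sum.cong) (use Suc.IH in auto)
  also have "\<dots> = (\<Sum>m\<le>k. of_nat (k choose m) * (-c) ^ (k - m) * mpow n Q (Suc m) i j)"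
    by (simp add: mmult_def sum_distrib_left sum_distrib_right mult.assoc mult.left_commute) (rule sum.swap)
  finally show ?case using Suc.IH[OF Suc.prems] binom_step[of k "-c" "\<lambda>m. mpow n Q m i j"] by simp
qed



lemma mpow_bound:
  assumes a: "0 \<le> a" and Qa: "\<And>i j. i \<in> {1..n} \<Longrightarrow> j \<in> {1..n} \<Longrightarrow> \<bar>Q i j\<bar> \<le> a"
  shows "i \<in> {1..n} \<Longrightarrow> \<bar>mpow n Q k i j\<bar> \<le> (real n * a) ^ k"
proof (induction k arbitrary: i)
  case 0 then show ?case by (simp add: idm_def)
next
  case (Suc k)
  have "\<bar>mpow n Q (Suc k) i j\<bar> \<le> (\<Sum>l=1..n. \<bar>Q i l * mpow n Q k l j\<bar>)"
    by (simp add: mmult_def sum_abs)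
  also have "\<dots> \<le> (\<Sum>l=1..n. a * (real n * a) ^ k)"
  proof (rule sum_mono)
    fix l assume l: "l \<in> {1..n}"
    show "\<bar>Q i l * mpow n Q k l j\<bar> \<le> a * (real n * a) ^ k"
      unfolding abs_mult by (rule mult_mono) (use Qa[OF Suc.prems l] Suc.IH[OF l] a in auto)
  qed
  finally show ?case by simp
qed

lemma mexp_term_summable:
  assumes a: "0 \<le> a" and Qa: "\<And>i j. i \<in> {1..n} \<Longrightarrow> j \<in> {1..n} \<Longrightarrow> \<bar>Q i j\<bar> \<le> a"
    and i: "i \<in> {1..n}"
  shows "summable (\<lambda>k. norm (mpow n Q k i j / fact k))"
proof (rule summable_comparison_test'[OF summable_exp[of "real n * a"]])
  fix k :: nat
  have "\<bar>mpow n Q k i j\<bar> / fact k \<le> (real n * a) ^ k / fact k"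
    by (rule divide_right_mono) (use mpow_bound[OF a Qa i] in auto)
  then show "norm (norm (mpow n Q k i j / fact k)) \<le> inverse (fact k) * (real n * a) ^ k"
    by (simp add: field_simps)
qed

lemma mexp_shift:
  assumes a: "0 \<le> a" and Qa: "\<And>i j. i \<in> {1..n} \<Longrightarrow> j \<in> {1..n} \<Longrightarrow> \<bar>Q i j\<bar> \<le> a"
    and i: "i \<in> {1..n}"
  shows "mexp n (\<lambda>i j. Q i j - c * idm i j) i j = exp (-c) * mexp n Q i j"
proof -
  define f where "f m = mpow n Q m i j / fact m" for m
  define g where "g l = (-c) ^ l / fact l" for l :: nat
  have sf: "summable (\<lambda>k. norm (f k))" unfolding f_def by (rule mexp_term_summable[OF a Qa i])
  have sg: "summable (\<lambda>k. norm (g k))"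
    unfolding g_def using summable_exp[of "\<bar>c\<bar>"] by (simp add: abs_mult power_abs field_simps)
  have eg: "(\<Sum>k. g k) = exp (-c)"
    using exp_converges[of "-c"] unfolding g_def by (simp add: sums_iff divide_inverse mult.commute scaleR_conv_of_real)
  have "mexp n (\<lambda>i j. Q i j - c * idm i j) i j = (\<Sum>k. \<Sum>m\<le>k. f m * g (k - m))"
    unfolding mexp_def
  proof (rule suminf_cong)
    fix k
    have "mpow n (\<lambda>i j. Q i j - c * idm i j) k i j / fact k
        = (\<Sum>m\<le>k. of_nat (k choose m) * (-c) ^ (k - m) * mpow n Q m i j / fact k)"
      by (simp add: mpow_shift[OF i] sum_divide_distrib)
    also have "\<dots> = (\<Sum>m\<le>k. f m * g (k - m))"
    proof (rule sum.cong[OF refl])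
      fix m assume "m \<in> {..k}"
      then have mk: "m \<le> k" by simp
      show "of_nat (k choose m) * (-c) ^ (k - m) * mpow n Q m i j / fact k = f m * g (k - m)"
        unfolding f_def g_def binomial_fact[OF mk] by (simp add: field_simps)
    qed
    finally show "mpow n (\<lambda>i j. Q i j - c * idm i j) k i j / fact k = (\<Sum>m\<le>k. f m * g (k - m))" .
  qed
  also have "\<dots> = (\<Sum>k. f k) * (\<Sum>k. g k)" by (rule Cauchy_product[OF sf sg, symmetric])
  finally show ?thesis using eg unfolding mexp_def f_def by simp
qed

lemma mpow_rowsum0:
  assumes "\<And>i. i \<in> {1..n} \<Longrightarrow> (\<Sum>j=1..n. P i j) = 0"
  shows "i \<in> {1..n} \<Longrightarrow> (\<Sum>j=1..n. mpow n P k i j) = (if k = 0 then 1 else 0)"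
proof (induction k arbitrary: i)
  case 0 then show ?case by (simp add: idm_def)
next
  case (Suc k)
  have "(\<Sum>j=1..n. mpow n P (Suc k) i j) = (\<Sum>l=1..n. P i l * (\<Sum>j=1..n. mpow n P k l j))"
    by (simp add: mmult_def sum_distrib_left) (rule sum.swap)
  also have "\<dots> = (\<Sum>l=1..n. P i l) * (if k = 0 then 1 else 0)"
    using Suc.IH by (simp add: sum_distrib_right)
  finally show ?case using assms Suc.prems by simp
qed

lemma mexp_rowsum:
  assumes a: "0 \<le> a" and Pa: "\<And>i j. i \<in> {1..n} \<Longrightarrow> j \<in> {1..n} \<Longrightarrow> \<bar>P i j\<bar> \<le> a"
    and rs: "\<And>i. i \<in> {1..n} \<Longrightarrow> (\<Sum>j=1..n. P i j) = 0" and i: "i \<in> {1..n}"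
  shows "(\<Sum>j=1..n. mexp n P i j) = 1"
proof -
  have "(\<Sum>j=1..n. mexp n P i j) = (\<Sum>k. \<Sum>j=1..n. mpow n P k i j / fact k)"
    unfolding mexp_def
    by (rule suminf_sum[symmetric]) (rule summable_norm_cancel[OF mexp_term_summable[OF a Pa i]])
  also have "\<dots> = (\<Sum>k. if k = 0 then 1 else 0)"
  proof (rule suminf_cong)
    fix k
    show "(\<Sum>j=1..n. mpow n P k i j / fact k) = (if k = 0 then 1 else 0)"
    proof -
      have "(\<Sum>j=1..n. mpow n P k i j / fact k) = (\<Sum>j=1..n. mpow n P k i j) / fact k"
        by (rule sum_divide_distrib[symmetric])
      also have "\<dots> = (if k = 0 then 1 else 0) / fact k" using mpow_rowsum0[where k=k, OF rs i] by (simp only:)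
      finally show ?thesis by simp
    qed
  qed
  also have "\<dots> = 1" using sums_single[of 0 "\<lambda>_. 1::real"] by (simp add: sums_iff)
  finally show ?thesis .
qed

lemma mexp_ge:
  assumes a: "0 \<le> a" and Qa: "\<And>i j. i \<in> {1..n} \<Longrightarrow> j \<in> {1..n} \<Longrightarrow> \<bar>Q i j\<bar> \<le> a"
    and nn: "\<And>i j. i \<in> {1..n} \<Longrightarrow> j \<in> {1..n} \<Longrightarrow> 0 \<le> Q i j"
    and i: "i \<in> {1..n}" and j: "j \<in> {1..n}"
  shows "Q i j \<le> mexp n Q i j" "0 \<le> mexp n Q i j"
proof -
  have s: "summable (\<lambda>k. mpow n Q k i j / fact k)"
    by (rule summable_norm_cancel[OF mexp_term_summable[OF a Qa i]])
  have t: "0 \<le> mpow n Q k i j / fact k" for k using mpow_nonneg[OF nn i] by simp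
  have "(\<Sum>k<2. mpow n Q k i j / fact k) \<le> mexp n Q i j"
    unfolding mexp_def by (rule sum_le_suminf[OF s]) (use t in auto)
  moreover have "mpow n Q 1 i j = Q i j" using sum_idm'[OF j, of "Q i"] by (simp add: mmult_def)
  ultimately show "Q i j \<le> mexp n Q i j" using t[of 0] by (simp add: numeral_2_eq_2)
  show "0 \<le> mexp n Q i j" unfolding mexp_def by (rule suminf_nonneg[OF s t])
qed



locale adjB =
  fixes n :: nat and B :: "nat \<Rightarrow> nat \<Rightarrow> real" and D :: real
  assumes B01: "\<And>i j. i \<in> {1..n} \<Longrightarrow> j \<in> {1..n} \<Longrightarrow> 0 \<le> B i j \<and> B i j \<le> 1"
    and Bdiag: "\<And>i. i \<in> {1..n} \<Longrightarrow> B i i = 0"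
    and Bsum: "\<And>i. i \<in> {1..n} \<Longrightarrow> (\<Sum>l=1..n. B i l) \<le> D"
begin

lemma Bsum_nn: "i \<in> {1..n} \<Longrightarrow> 0 \<le> (\<Sum>l=1..n. B i l)"
  using B01 by (auto intro!: sum_nonneg)

lemma D_nn: "1 \<le> n \<Longrightarrow> 0 \<le> D"
  using Bsum_nn[of 1] Bsum[of 1] by auto

lemma lap_off: "i \<noteq> j \<Longrightarrow> laplacian n B i j = - B i j"
  by (simp add: laplacian_def)

lemma lap_diag: "i \<in> {1..n} \<Longrightarrow> laplacian n B i i = (\<Sum>l=1..n. B i l)"
  by (simp add: laplacian_def Bdiag)

lemma lap_rowsum: assumes i: "i \<in> {1..n}" shows "(\<Sum>j=1..n. laplacian n B i j) = 0"
proof -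
  have "(\<Sum>j=1..n. laplacian n B i j) = (\<Sum>j=1..n. (if i = j then (\<Sum>l=1..n. B i l) else 0)) - (\<Sum>j=1..n. B i j)"
    by (simp add: laplacian_def sum_subtractf)
  also have "(\<Sum>j=1..n. (if i = j then (\<Sum>l=1..n. B i l) else 0)) = (\<Sum>l=1..n. B i l)"
    using i by (simp add: sum.delta)
  finally show ?thesis by simp
qed

lemma euler_W:
  assumes h: "0 < h" "h * D < 1" and i: "i \<in> {1..n}" and j: "j \<in> {1..n}"
  shows "0 \<le> idm i j - h * laplacian n B i j"
    and "0 < idm i i - h * laplacian n B i i"
    and "i \<noteq> j \<Longrightarrow> idm i j - h * laplacian n B i j = h * B i j"
    and "(\<Sum>j=1..n. idm i j - h * laplacian n B i j) = 1"
proof -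
  have d: "0 < idm i i - h * laplacian n B i i"
  proof -
    have "h * (\<Sum>l=1..n. B i l) \<le> h * D" using Bsum[OF i] h by (simp add: mult_left_mono)
    then have "h * (\<Sum>l=1..n. B i l) < 1" using h by linarith
    then show ?thesis using lap_diag[OF i] by (simp add: idm_def)
  qed
  then show "0 < idm i i - h * laplacian n B i i" .
  show off: "i \<noteq> j \<Longrightarrow> idm i j - h * laplacian n B i j = h * B i j"
    by (simp add: idm_def lap_off)
  show "0 \<le> idm i j - h * laplacian n B i j"
    using d off B01[OF i j] h by (cases "i = j") auto
  have "(\<Sum>j=1..n. idm i j - h * laplacian n B i j) = (\<Sum>j=1..n. idm i j) - h * (\<Sum>j=1..n. laplacian n B i j)"
    by (simp add: sum_subtractf sum_distrib_left)
  also have "\<dots> = 1" using lap_rowsum[OF i] i by (simp add: idm_def)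
  finally show "(\<Sum>j=1..n. idm i j - h * laplacian n B i j) = 1" .
qed

lemma exp_Q:
  assumes d: "0 < \<Delta>" and n: "1 \<le> n" and i: "i \<in> {1..n}" and j: "j \<in> {1..n}"
  defines "c \<equiv> \<Delta> * D + 1"
  shows "0 \<le> - (\<Delta> * laplacian n B i j) + c * idm i j"
    and "\<bar>- (\<Delta> * laplacian n B i j) + c * idm i j\<bar> \<le> c + \<Delta>"
    and "0 < - (\<Delta> * laplacian n B i i) + c * idm i i"
    and "i \<noteq> j \<Longrightarrow> - (\<Delta> * laplacian n B i j) + c * idm i j = \<Delta> * B i j"
    and "\<bar>- (\<Delta> * laplacian n B i j)\<bar> \<le> \<Delta> * D + \<Delta>"
proof -
  have D0: "0 \<le> D" using D_nn[OF n] .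
  have S: "\<Delta> * (\<Sum>l=1..n. B i l) \<le> \<Delta> * D" "0 \<le> \<Delta> * (\<Sum>l=1..n. B i l)"
    using Bsum[OF i] Bsum_nn[OF i] d by (auto simp: mult_left_mono)
  have dg: "- (\<Delta> * laplacian n B i i) + c * idm i i = c - \<Delta> * (\<Sum>l=1..n. B i l)"
    using lap_diag[OF i] by (simp add: idm_def)
  have off: "i \<noteq> j \<Longrightarrow> - (\<Delta> * laplacian n B i j) + c * idm i j = \<Delta> * B i j"
    by (simp add: idm_def lap_off)
  then show "i \<noteq> j \<Longrightarrow> - (\<Delta> * laplacian n B i j) + c * idm i j = \<Delta> * B i j" .
  show "0 < - (\<Delta> * laplacian n B i i) + c * idm i i" using dg S c_def by simp
  have Bij: "0 \<le> \<Delta> * B i j" "\<Delta> * B i j \<le> \<Delta>" using B01[OF i j] d by (auto simp: mult_left_le)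
  show "0 \<le> - (\<Delta> * laplacian n B i j) + c * idm i j"
    using dg S c_def off Bij by (cases "i = j") (auto simp: idm_def)
  have DD: "0 \<le> \<Delta> * D" using d D0 by simp
  show "\<bar>- (\<Delta> * laplacian n B i j) + c * idm i j\<bar> \<le> c + \<Delta>"
  proof (cases "i = j")
    case True
    then have "- (\<Delta> * laplacian n B i j) + c * idm i j = c - \<Delta> * (\<Sum>l=1..n. B i l)" using dg by simp
    then show ?thesis unfolding abs_le_iff c_def using S DD d by linarith
  next
    case False
    have "\<bar>- (\<Delta> * laplacian n B i j) + c * idm i j\<bar> = \<Delta> * B i j"
      using off[OF False] Bij by simp
    moreover have "\<Delta> * B i j \<le> c + \<Delta>" using Bij(2) DD unfolding c_def by linarith
    ultimately show ?thesis by simp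
  qed
  show "\<bar>- (\<Delta> * laplacian n B i j)\<bar> \<le> \<Delta> * D + \<Delta>"
  proof (cases "i = j")
    case True
    then have "\<bar>- (\<Delta> * laplacian n B i j)\<bar> = \<Delta> * (\<Sum>l=1..n. B i l)" using lap_diag[OF i] S(2) by simp
    moreover have "\<Delta> * (\<Sum>l=1..n. B i l) \<le> \<Delta> * D + \<Delta>" using S(1) d by linarith
    ultimately show ?thesis by linarith
  next
    case False
    then have "\<bar>- (\<Delta> * laplacian n B i j)\<bar> = \<Delta> * B i j" using lap_off[of i j] Bij by simp
    moreover have "\<Delta> * B i j \<le> \<Delta> * D + \<Delta>" using Bij(2) DD by linarith
    ultimately show ?thesis by simp
  qed
qed

end



lemma fa_adjB:
  assumes A: "sym01_adj n A"
  shows "adjB n (fail_adj s A q) (dmax n A)"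
proof
  fix i j assume i: "i \<in> {1..n}" and j: "j \<in> {1..n}"
  have "A i j \<in> {0,1}" using A i j unfolding sym01_adj_def by blast
  then show "0 \<le> fail_adj s A q i j \<and> fail_adj s A q i j \<le> 1"
    by (auto simp: fail_adj_def)
next
  fix i assume i: "i \<in> {1..n}"
  show "fail_adj s A q i i = 0" using A i unfolding sym01_adj_def by (auto simp: fail_adj_def)
  have "(\<Sum>l=1..n. fail_adj s A q i l) \<le> (\<Sum>l=1..n. A i l)"
  proof (rule sum_mono)
    fix l assume l: "l \<in> {1..n}"
    have "A i l \<in> {0,1}" using A i l unfolding sym01_adj_def by blast
    then show "fail_adj s A q i l \<le> A i l" by (auto simp: fail_adj_def)
  qed
  also have "\<dots> \<le> dmax n A" unfolding dmax_def using i by (intro Max_ge) auto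
  finally show "(\<Sum>l=1..n. fail_adj s A q i l) \<le> dmax n A" .
qed

lemma fa4: "fail_adj s A 4 = A"
  by (auto simp: fail_adj_def failed_def split: scenario.splits intro!: ext)

lemma A_edge:
  assumes A: "sym01_adj n A" and i: "i \<in> {1..n}" and j: "j \<in> {1..n}" and e: "A i j = 1"
  shows "i \<noteq> j"
  using A i e unfolding sym01_adj_def by auto

lemma euler_props:
  fixes s :: scenario and A :: "nat \<Rightarrow> nat \<Rightarrow> real" and h :: real and kbar n :: nat
  assumes A: "sym01_adj n A" and c: "connected_graph n A"
    and h: "0 < h" "h * dmax n A < 1" and kb: "1 \<le> kbar"
  defines "\<Phi> \<equiv> (\<lambda>q. euler_trans n h kbar (laplacian n (fail_adj s A q)))"
  shows "\<And>q i j. q \<in> {1..4} \<Longrightarrow> i \<in> {1..n} \<Longrightarrow> j \<in> {1..n} \<Longrightarrow> 0 \<le> \<Phi> q i j"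
    and "\<And>q i. q \<in> {1..4} \<Longrightarrow> i \<in> {1..n} \<Longrightarrow> (\<Sum>j=1..n. \<Phi> q i j) = 1"
    and "\<exists>b>0. \<forall>i\<in>{1..n}. \<forall>j\<in>{1..n}. 0 < mpow n (\<Phi> 4) b i j"
proof -
  define W where "W q = (\<lambda>i j. idm i j - h * laplacian n (fail_adj s A q) i j)" for q
  have PhiW: "\<Phi> q = mpow n (W q) kbar" for q unfolding \<Phi>_def W_def euler_trans_def by simp
  interpret adjB n "fail_adj s A q" "dmax n A" for q by (rule fa_adjB[OF A])
  have Wnn: "\<And>i j. i \<in> {1..n} \<Longrightarrow> j \<in> {1..n} \<Longrightarrow> 0 \<le> W q i j" for q
    unfolding W_def by (rule euler_W(1)[OF h])
  have Wrs: "\<And>i. i \<in> {1..n} \<Longrightarrow> (\<Sum>j=1..n. W q i j) = 1" for q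
    unfolding W_def by (rule euler_W(4)[OF h]) auto
  have Wd: "\<And>i. i \<in> {1..n} \<Longrightarrow> 0 < W q i i" for q
    unfolding W_def by (rule euler_W(2)[OF h]) auto
  have Phinn: "\<And>i j. i \<in> {1..n} \<Longrightarrow> j \<in> {1..n} \<Longrightarrow> 0 \<le> \<Phi> q i j" for q
    unfolding PhiW by (rule mpow_nonneg[where Q="W q", OF Wnn])
  then show "\<And>q i j. q \<in> {1..4} \<Longrightarrow> i \<in> {1..n} \<Longrightarrow> j \<in> {1..n} \<Longrightarrow> 0 \<le> \<Phi> q i j" by blast
  show "\<And>q i. q \<in> {1..4} \<Longrightarrow> i \<in> {1..n} \<Longrightarrow> (\<Sum>j=1..n. \<Phi> q i j) = 1"
  proof -
    fix q i assume i: "i \<in> {1..n}"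
    show "(\<Sum>j=1..n. \<Phi> q i j) = 1" unfolding PhiW by (rule mpow_rowsum[where Q="W q"]) (use Wrs i in auto)
  qed
  obtain k' where k': "kbar = Suc k'" using kb by (cases kbar) auto
  show "\<exists>b>0. \<forall>i\<in>{1..n}. \<forall>j\<in>{1..n}. 0 < mpow n (\<Phi> 4) b i j"
  proof (rule mpow_all_pos[where Q="\<Phi> 4", OF Phinn _ _ c])
    fix i assume i: "i \<in> {1..n}"
    show "0 < \<Phi> 4 i i" unfolding PhiW by (rule mpow_diag_pos[where Q="W 4", OF Wnn Wd i])
  next
    fix i j assume i: "i \<in> {1..n}" and j: "j \<in> {1..n}" and e: "A i j = 1"
    have ij: "i \<noteq> j" by (rule A_edge[OF A i j e])
    have "W 4 i j = h * fail_adj s A 4 i j" unfolding W_def by (rule euler_W(3)[OF h i j ij])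
    then have "W 4 i j = h" using e fa4 by simp
    then have "0 < W 4 i j * mpow n (W 4) k' j j" using h mpow_diag_pos[where Q="W 4", OF Wnn Wd j] by simp
    also have "\<dots> \<le> \<Phi> 4 i j" unfolding PhiW k' by (rule mpow_term_le[where Q="W 4", OF Wnn i j])
    finally show "0 < \<Phi> 4 i j" .
  qed
qed

lemma exp_props:
  fixes s :: scenario and A :: "nat \<Rightarrow> nat \<Rightarrow> real" and \<Delta> :: real and n :: nat
  assumes A: "sym01_adj n A" and c: "connected_graph n A" and n: "1 \<le> n"
    and d: "0 < \<Delta>"
  defines "\<Phi> \<equiv> (\<lambda>q. exp_trans n \<Delta> (laplacian n (fail_adj s A q)))"
  shows "\<And>q i j. q \<in> {1..4} \<Longrightarrow> i \<in> {1..n} \<Longrightarrow> j \<in> {1..n} \<Longrightarrow> 0 \<le> \<Phi> q i j"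
    and "\<And>q i. q \<in> {1..4} \<Longrightarrow> i \<in> {1..n} \<Longrightarrow> (\<Sum>j=1..n. \<Phi> q i j) = 1"
    and "\<exists>b>0. \<forall>i\<in>{1..n}. \<forall>j\<in>{1..n}. 0 < mpow n (\<Phi> 4) b i j"
proof -
  define D where "D = dmax n A"
  define cc where "cc = \<Delta> * D + 1"
  define L where "L q = laplacian n (fail_adj s A q)" for q
  define Q where "Q q = (\<lambda>i j. - (\<Delta> * L q i j) + cc * idm i j)" for q
  interpret adjB n "fail_adj s A q" D for q unfolding D_def by (rule fa_adjB[OF A])
  have Qnn: "\<And>i j. i \<in> {1..n} \<Longrightarrow> j \<in> {1..n} \<Longrightarrow> 0 \<le> Q q i j" for q
    unfolding Q_def L_def cc_def by (rule exp_Q(1)[OF d n])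
  have Qb: "\<And>i j. i \<in> {1..n} \<Longrightarrow> j \<in> {1..n} \<Longrightarrow> \<bar>Q q i j\<bar> \<le> cc + \<Delta>" for q
    unfolding Q_def L_def cc_def by (rule exp_Q(2)[OF d n])
  have Qd: "\<And>i. i \<in> {1..n} \<Longrightarrow> 0 < Q q i i" for q
    unfolding Q_def L_def cc_def by (rule exp_Q(3)[OF d n]) auto
  have D0: "0 \<le> D" by (rule D_nn[OF n])
  have cc0: "0 \<le> cc + \<Delta>" using d D0 unfolding cc_def by simp
  have shift: "\<Phi> q i j = exp (- cc) * mexp n (Q q) i j" if i: "i \<in> {1..n}" for q i j
  proof -
    have "(\<lambda>i j. Q q i j - cc * idm i j) = (\<lambda>i j. - (\<Delta> * L q i j))" unfolding Q_def by auto
    moreover have "\<Phi> q = mexp n (\<lambda>i j. - (\<Delta> * L q i j))"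
      unfolding \<Phi>_def L_def exp_trans_def by simp
    ultimately show ?thesis using mexp_shift[where Q="Q q" and c=cc and j=j, OF cc0 Qb i] by simp
  qed
  have Phinn: "\<And>i j. i \<in> {1..n} \<Longrightarrow> j \<in> {1..n} \<Longrightarrow> 0 \<le> \<Phi> q i j" for q
    using shift mexp_ge(2)[where Q="Q q", OF cc0 Qb Qnn] by simp
  then show "\<And>q i j. q \<in> {1..4} \<Longrightarrow> i \<in> {1..n} \<Longrightarrow> j \<in> {1..n} \<Longrightarrow> 0 \<le> \<Phi> q i j" by blast
  have Phige: "exp (- cc) * Q q i j \<le> \<Phi> q i j" if "i \<in> {1..n}" "j \<in> {1..n}" for q i j
    using shift[OF that(1)] mexp_ge(1)[where Q="Q q", OF cc0 Qb Qnn that] by simp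
  show "\<And>q i. q \<in> {1..4} \<Longrightarrow> i \<in> {1..n} \<Longrightarrow> (\<Sum>j=1..n. \<Phi> q i j) = 1"
  proof -
    fix q i assume i: "i \<in> {1..n}"
    have Pb: "\<And>i j. i \<in> {1..n} \<Longrightarrow> j \<in> {1..n} \<Longrightarrow> \<bar>- (\<Delta> * L q i j)\<bar> \<le> \<Delta> * D + \<Delta>"
      unfolding L_def by (rule exp_Q(5)[OF d n])
    have Prs: "\<And>i. i \<in> {1..n} \<Longrightarrow> (\<Sum>j=1..n. - (\<Delta> * L q i j)) = 0"
      unfolding L_def using lap_rowsum by (simp add: sum_negf flip: sum_distrib_left)
    have "0 \<le> \<Delta> * D + \<Delta>" using d D0 by simp
    from mexp_rowsum[where P="\<lambda>i j. - (\<Delta> * L q i j)", OF this Pb Prs i]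
    show "(\<Sum>j=1..n. \<Phi> q i j) = 1" unfolding \<Phi>_def L_def exp_trans_def by simp
  qed
  show "\<exists>b>0. \<forall>i\<in>{1..n}. \<forall>j\<in>{1..n}. 0 < mpow n (\<Phi> 4) b i j"
  proof (rule mpow_all_pos[where Q="\<Phi> 4", OF Phinn _ _ c])
    fix i assume i: "i \<in> {1..n}"
    have "0 < exp (- cc) * Q 4 i i" using Qd[OF i] by simp
    then show "0 < \<Phi> 4 i i" using Phige[where q=4, OF i i] by linarith
  next
    fix i j assume i: "i \<in> {1..n}" and j: "j \<in> {1..n}" and e: "A i j = 1"
    have ij: "i \<noteq> j" by (rule A_edge[OF A i j e])
    have "Q 4 i j = \<Delta> * fail_adj s A 4 i j" unfolding Q_def L_def cc_def by (rule exp_Q(4)[OF d n i j ij])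
    then have "Q 4 i j = \<Delta>" using e fa4 by simp
    then have "0 < exp (- cc) * Q 4 i j" using d by simp
    then show "0 < \<Phi> 4 i j" using Phige[where q=4, OF i j] by linarith
  qed
qed



theorem theorem3:
  fixes n :: nat and A :: "nat \<Rightarrow> nat \<Rightarrow> real" and s :: scenario
    and \<alpha> \<beta> \<gamma> \<theta> h :: real and kbar :: nat
    and M :: "'a measure" and \<sigma> :: "nat \<Rightarrow> 'a \<Rightarrow> nat" and x0 :: "nat \<Rightarrow> real"
  assumes "n \<ge> 3"
    and "sym01_adj n A"
    and "connected_graph n A"
    and "0 < \<alpha>" "\<alpha> < 1" "0 < \<beta>" "\<beta> < 1" "0 < \<gamma>" "\<gamma> < 1" "0 < \<theta>" "\<theta> < 1"
    and "\<alpha> + \<beta> + \<gamma> + \<theta> = 1"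
    and "kbar \<ge> 1"
    and "0 < h" and "h < 1 / dmax n A"
    and "strongly_connected n (expected_graph s A (probs \<alpha> \<beta> \<gamma> \<theta>))"
    and "prob_space M"
    and "\<And>k. \<sigma> k \<in> measurable M (count_space UNIV)"
    and "prob_space.indep_vars M (\<lambda>_. count_space UNIV) \<sigma> UNIV"
    and "\<And>k \<omega>. \<omega> \<in> space M \<Longrightarrow> \<sigma> k \<omega> \<in> {1..4}"
    and "\<And>k q. q \<in> {1..4} \<Longrightarrow> measure M {\<omega> \<in> space M. \<sigma> k \<omega> = q} = probs \<alpha> \<beta> \<gamma> \<theta> q"
  shows "measure M {\<omega> \<in> space M.
            (\<lambda>k. spread n (traj n (\<lambda>q. euler_trans n h kbar (laplacian n (fail_adj s A q)))
                                 (\<lambda>k. \<sigma> k \<omega>) x0 k)) \<longlonglongrightarrow> 0} = 1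
       \<and> measure M {\<omega> \<in> space M.
            (\<lambda>k. spread n (traj n (\<lambda>q. exp_trans n (real kbar * h) (laplacian n (fail_adj s A q)))
                                 (\<lambda>k. \<sigma> k \<omega>) x0 k)) \<longlonglongrightarrow> 0} = 1"
proof -
  note as = assms
  have n1: "1 \<le> n" using as(1) by simp
  have Dpos: "0 < dmax n A"
  proof (rule ccontr)
    assume "\<not> 0 < dmax n A"
    then have "1 / dmax n A \<le> 0" by (simp add: divide_nonpos_pos)
    then show False using as(14,15) by linarith
  qed
  have hD: "h * dmax n A < 1" using as(15) Dpos by (simp add: less_divide_eq)
  have pr4: "measure M {\<omega> \<in> space M. \<sigma> k \<omega> = 4} = \<theta>" for k
    using as(21)[of 4 k] by (simp add: probs_def)
  have dpos: "0 < real kbar * h" using as(13,14) by simp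
  show ?thesis
  proof
    show "measure M {\<omega> \<in> space M.
            (\<lambda>k. spread n (traj n (\<lambda>q. euler_trans n h kbar (laplacian n (fail_adj s A q)))
                                 (\<lambda>k. \<sigma> k \<omega>) x0 k)) \<longlonglongrightarrow> 0} = 1"
      by (rule consensus_generic[where \<Phi>="\<lambda>q. euler_trans n h kbar (laplacian n (fail_adj s A q))",
            OF as(17,18,19,20) pr4 as(10) n1
            euler_props[where s=s, OF as(2,3) as(14) hD as(13)]])
    show "measure M {\<omega> \<in> space M.
            (\<lambda>k. spread n (traj n (\<lambda>q. exp_trans n (real kbar * h) (laplacian n (fail_adj s A q)))
                                 (\<lambda>k. \<sigma> k \<omega>) x0 k)) \<longlonglongrightarrow> 0} = 1"
      by (rule consensus_generic[where \<Phi>="\<lambda>q. exp_trans n (real kbar * h) (laplacian n (fail_adj s A q))",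
            OF as(17,18,19,20) pr4 as(10) n1
            exp_props[where s=s, OF as(2,3) n1 dpos]])
  qed
qed


end
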